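(* Let $S\in\mathbb{R}^{m\times n}$ and $x_0\in\mathbb{R}^d$. Let $(x_t)_{t\geqslant0}$ be any sequence satisfying $x_{t+1}\in x_0+H_S^{-1}\,\mathrm{span}\{\nabla f(x_0),\dots,\nabla f(x_t)\}$ for all $t\geqslant0$. Then for every $t\geqslant1$, $$\delta_t\geqslant \ell^*_t(S,x_0):=\frac12\min_{Q\in\mathbb{R}_t[X],\,Q(0)=1}\ \sum_{i=1}^d Q(\lambda_i^{-1})^2\,\xi_i^2 .$$
   Context: Let $A\in\mathbb{R}^{n\times d}$ with $n\geqslant d$, $b\in\mathbb{R}^d$, $\Lambda\in\mathbb{R}^{d\times d}$ diagonal with $\Lambda\succeq I_d$, and $\nu>0$. Set $H=A^\top A+\nu^2\Lambda$, $f(x)=\frac12 x^\top Hx-b^\top x$, $x^*=H^{-1}b$. For $S\in\mathbb{R}^{m\times n}$ set $H_S=A^\top S^\top SA+\nu^2\Lambda$ and $C_S=H^{-1/2}H_SH^{-1/2}$, with eigenvalue decomposition $C_S=\sum_{i=1}^d\lambda_iv_iv_i^\top$ ($\lambda_1\geqslant\dots\geqslant\lambda_d>0$, orthonormal $v_i$). Let $\xi_i=\langle v_i,H^{1/2}(x_0-x^* )\rangle$, $\delta_t=\frac12\|x_t-x^*\|_H^2$ with $\|z\|_H^2=z^\top Hz$, and let $\mathbb{R}_t[X]$ denote the real polynomials of degree at most $t$. *)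

theory Defs
  imports "HOL-Analysis.Analysis" "HOL-Computational_Algebra.Polynomial"
begin

text \<open>H = A^T A + nu^2 Lambda\<close>
definition hessH :: "real^'d^'n \<Rightarrow> real \<Rightarrow> real^'d^'d \<Rightarrow> real^'d^'d" where
  "hessH A \<nu> \<Lambda> = transpose A ** A + (\<nu>^2) *\<^sub>R \<Lambda>"

text \<open>H_S = A^T S^T S A + nu^2 Lambda\<close>
definition sketchH :: "real^'n^'m \<Rightarrow> real^'d^'n \<Rightarrow> real \<Rightarrow> real^'d^'d \<Rightarrow> real^'d^'d" where
  "sketchH S A \<nu> \<Lambda> = transpose A ** transpose S ** S ** A + (\<nu>^2) *\<^sub>R \<Lambda>"

text \<open>f(x) = 1/2 x^T H x - b^T x\<close>
definition fobj :: "real^'d^'d \<Rightarrow> real^'d \<Rightarrow> real^'d \<Rightarrow> real" where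
  "fobj H b x = (1/2) * (x \<bullet> (H *v x)) - b \<bullet> x"

text \<open>gradient of f (H symmetric): H x - b\<close>
definition gradf :: "real^'d^'d \<Rightarrow> real^'d \<Rightarrow> real^'d \<Rightarrow> real^'d" where
  "gradf H b x = H *v x - b"

text \<open>outer product v v^T\<close>
definition outer :: "real^'d \<Rightarrow> real^'d \<Rightarrow> real^'d^'d" where
  "outer u w = (\<chi> i j. u$i * w$j)"

text \<open>delta = 1/2 ||x - x*||_H^2\<close>
definition hnorm_sq :: "real^'d^'d \<Rightarrow> real^'d \<Rightarrow> real" where
  "hnorm_sq H z = z \<bullet> (H *v z)"

text \<open>l*_t = 1/2 min over Q of degree <= t with Q(0)=1 of sum_i Q(1/lambda_i)^2 xi_i^2
  (the minimum is attained, so it equals the infimum)\<close>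
definition lstar :: "nat \<Rightarrow> ('d::finite \<Rightarrow> real) \<Rightarrow> ('d \<Rightarrow> real) \<Rightarrow> real" where
  "lstar t lam xi = (1/2) * Inf {(\<Sum>i\<in>UNIV. (poly Q (inverse (lam i)))^2 * (xi i)^2) | Q.
       degree Q \<le> t \<and> poly Q 0 = 1}"

end

theory Submission
  imports Defs
begin

lemma inv_props:
  fixes A :: "real^'n^'n"
  assumes "invertible A"
  shows "A ** matrix_inv A = mat 1" "matrix_inv A ** A = mat 1"
proof -
  have "\<exists>A'. A ** A' = mat 1 \<and> A' ** A = mat 1" using assms unfolding invertible_def by blast
  then have "A ** matrix_inv A = mat 1 \<and> matrix_inv A ** A = mat 1"
    unfolding matrix_inv_def by (rule someI_ex)
  then show "A ** matrix_inv A = mat 1" "matrix_inv A ** A = mat 1" by auto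
qed

lemma inv_ker:
  fixes A :: "real^'n^'n"
  assumes "\<And>x. A *v x = 0 \<Longrightarrow> x = 0"
  shows "invertible A"
  using assms matrix_left_invertible_ker(1)[of A] invertible_left_inverse[of A] by metis

lemma inner_transpose_mv:
  fixes A :: "real^'n^'m"
  shows "z \<bullet> (transpose A *v w) = (A *v z) \<bullet> w"
  by (metis dot_lmul_matrix inner_commute transpose_matrix_vector)

lemma orthonormal_expand:
  fixes v :: "'d::finite \<Rightarrow> real^'d"
  assumes on: "\<forall>i j. v i \<bullet> v j = (if i = j then 1 else 0)"
  shows "y = (\<Sum>k\<in>UNIV. (v k \<bullet> y) *\<^sub>R v k)" and "y \<bullet> y = (\<Sum>k\<in>UNIV. (v k \<bullet> y)^2)"
proof -
  define V :: "real^'d^'d" where "V = (\<chi> i. v i)"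
  have "V ** transpose V = mat 1"
    using on by (simp add: V_def matrix_matrix_mult_def transpose_def mat_def vec_eq_iff inner_vec_def)
  then have VV: "transpose V ** V = mat 1" using matrix_left_right_inverse by blast
  have Vy: "V *v y = (\<chi> k. v k \<bullet> y)"
    by (simp add: V_def matrix_vector_mult_def vec_eq_iff inner_vec_def)
  have "y = transpose V *v (V *v y)" by (simp add: matrix_vector_mul_assoc VV)
  also have "\<dots> = (\<Sum>k\<in>UNIV. (v k \<bullet> y) *\<^sub>R v k)"
    unfolding Vy by (simp add: V_def transpose_def matrix_vector_mult_def vec_eq_iff sum_component mult.commute)
  finally show "y = (\<Sum>k\<in>UNIV. (v k \<bullet> y) *\<^sub>R v k)" .
  have "y \<bullet> y = y \<bullet> (transpose V *v (V *v y))" by (simp add: matrix_vector_mul_assoc VV)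
  also have "\<dots> = (V *v y) \<bullet> (V *v y)" by (rule inner_transpose_mv)
  also have "\<dots> = (\<Sum>k\<in>UNIV. (v k \<bullet> y)^2)" unfolding Vy by (simp add: inner_vec_def power2_eq_square)
  finally show "y \<bullet> y = (\<Sum>k\<in>UNIV. (v k \<bullet> y)^2)" .
qed

lemma outer_sum_mv:
  fixes v :: "'d::finite \<Rightarrow> real^'d"
  shows "(\<Sum>i\<in>UNIV. lam i *\<^sub>R outer (v i) (v i)) *v w = (\<Sum>i\<in>UNIV. (lam i * (v i \<bullet> w)) *\<^sub>R v i)"
proof (rule vec_eq_iff[THEN iffD2, rule_format])
  fix a
  have "((\<Sum>i\<in>UNIV. lam i *\<^sub>R outer (v i) (v i)) *v w) $ a
     = (\<Sum>b\<in>UNIV. (\<Sum>i\<in>UNIV. lam i * (v i $ a * v i $ b)) * w $ b)"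
    by (simp add: matrix_vector_mult_def outer_def)
  also have "\<dots> = (\<Sum>b\<in>UNIV. \<Sum>i\<in>UNIV. lam i * v i $ a * v i $ b * w $ b)"
    by (simp add: sum_distrib_right mult.assoc)
  also have "\<dots> = (\<Sum>i\<in>UNIV. \<Sum>b\<in>UNIV. lam i * v i $ a * v i $ b * w $ b)"
    by (rule sum.swap)
  also have "\<dots> = (\<Sum>i\<in>UNIV. (lam i * (v i \<bullet> w)) * v i $ a)"
    by (simp add: inner_vec_def sum_distrib_left sum_distrib_right mult_ac)
  also have "\<dots> = (\<Sum>i\<in>UNIV. (lam i * (v i \<bullet> w)) *\<^sub>R v i) $ a"
    by simp
  finally show "((\<Sum>i\<in>UNIV. lam i *\<^sub>R outer (v i) (v i)) *v w) $ a = (\<Sum>i\<in>UNIV. (lam i * (v i \<bullet> w)) *\<^sub>R v i) $ a" .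
qed

lemma diag_mv:
  fixes L :: "real^'d^'d"
  assumes "\<forall>i j. i \<noteq> j \<longrightarrow> L$i$j = 0"
  shows "(L *v z)$i = L$i$i * z$i"
proof -
  have "(L *v z)$i = (\<Sum>j\<in>UNIV. L$i$j * z$j)" by (simp add: matrix_vector_mult_def)
  also have "\<dots> = (\<Sum>j\<in>UNIV. if j = i then L$i$i * z$i else 0)"
  proof (rule sum.cong)
    fix j show "L$i$j * z$j = (if j = i then L$i$i * z$i else 0)"
      using assms by (cases "j = i") auto
  qed simp
  also have "\<dots> = L$i$i * z$i" by simp
  finally show ?thesis .
qed

lemma sketch_pd:
  fixes A :: "real^'d^'n" and S :: "real^'n^'m" and \<Lambda> :: "real^'d^'d"
  assumes Ldiag: "\<forall>i j. i \<noteq> j \<longrightarrow> \<Lambda>$i$j = 0"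
    and Lge: "\<forall>i. \<Lambda>$i$i \<ge> 1" and nu: "\<nu> > 0" and z: "z \<noteq> 0"
  shows "z \<bullet> (sketchH S A \<nu> \<Lambda> *v z) > 0"
proof -
  have e1: "sketchH S A \<nu> \<Lambda> *v z = transpose A *v (transpose S *v (S *v (A *v z))) + \<nu>^2 *\<^sub>R (\<Lambda> *v z)"
    by (simp add: sketchH_def matrix_vector_mult_add_rdistrib matrix_vector_mul_assoc scaleR_matrix_vector_assoc matrix_mul_assoc)
  have t1: "z \<bullet> (transpose A *v (transpose S *v (S *v (A *v z)))) = (S *v (A *v z)) \<bullet> (S *v (A *v z))"
    by (simp only: inner_transpose_mv)
  have t2: "z \<bullet> (\<Lambda> *v z) \<ge> z \<bullet> z"
  proof -
    have "z \<bullet> (\<Lambda> *v z) = (\<Sum>i\<in>UNIV. \<Lambda>$i$i * (z$i * z$i))"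
      by (simp add: inner_vec_def diag_mv[OF Ldiag] mult_ac)
    also have "\<dots> \<ge> (\<Sum>i\<in>UNIV. z$i * z$i)"
    proof (rule sum_mono)
      fix i
      show "z$i * z$i \<le> \<Lambda>$i$i * (z$i * z$i)"
        using mult_right_mono[OF Lge[rule_format, of i] zero_le_square[of "z$i"]] by simp
    qed
    finally show ?thesis by (simp add: inner_vec_def)
  qed
  have "z \<bullet> z > 0" using z by simp
  then have "z \<bullet> (\<Lambda> *v z) > 0" using t2 by linarith
  then have p: "\<nu>^2 * (z \<bullet> (\<Lambda> *v z)) > 0" using nu by simp
  have q: "(S *v (A *v z)) \<bullet> (S *v (A *v z)) \<ge> 0" by simp
  show ?thesis unfolding e1 inner_add_right t1 inner_scaleR_right using p q by linarith
qed

theorem lemma3p1: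
  fixes A :: "real^'d^'n" and b :: "real^'d" and \<Lambda> :: "real^'d^'d" and \<nu> :: real
    and S :: "real^'n^'m" and x :: "nat \<Rightarrow> real^'d"
    and Hh :: "real^'d^'d" and lam :: "'d \<Rightarrow> real" and v :: "'d \<Rightarrow> real^'d"
  assumes nd: "CARD('d) \<le> CARD('n)"
    and Ldiag: "\<forall>i j. i \<noteq> j \<longrightarrow> \<Lambda>$i$j = 0"
    and Lge: "\<forall>i. \<Lambda>$i$i \<ge> 1"
    and nu: "\<nu> > 0"
    and Hh_sym: "transpose Hh = Hh"
    and Hh_pd: "\<forall>z. z \<noteq> 0 \<longrightarrow> z \<bullet> (Hh *v z) > 0"
    and Hh_sq: "Hh ** Hh = hessH A \<nu> \<Lambda>"
    and v_on: "\<forall>i j. v i \<bullet> v j = (if i = j then 1 else 0)"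
    and eig: "matrix_inv Hh ** sketchH S A \<nu> \<Lambda> ** matrix_inv Hh
              = (\<Sum>i\<in>UNIV. lam i *\<^sub>R outer (v i) (v i))"
    and iter: "\<forall>t. x (Suc t) - x 0 \<in>
              (\<lambda>y. matrix_inv (sketchH S A \<nu> \<Lambda>) *v y) `
                span ((\<lambda>k. gradf (hessH A \<nu> \<Lambda>) b (x k)) ` {..t})"
    and t1: "t \<ge> 1"
  shows "(1/2) * hnorm_sq (hessH A \<nu> \<Lambda>) (x t - matrix_inv (hessH A \<nu> \<Lambda>) *v b)
         \<ge> lstar t lam
              (\<lambda>i. v i \<bullet> (Hh *v (x 0 - matrix_inv (hessH A \<nu> \<Lambda>) *v b)))"
proof -
  define H where "H = hessH A \<nu> \<Lambda>"
  define Hs where "Hs = sketchH S A \<nu> \<Lambda>"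
  define xs where "xs = matrix_inv H *v b"
  define e where "e k = x k - xs" for k
  define \<xi> where "\<xi> i = v i \<bullet> (Hh *v e 0)" for i
  define Cinv where "Cinv = Hh ** matrix_inv Hs ** Hh"
  define C where "C = matrix_inv Hh ** Hs ** matrix_inv Hh"
  have Hh_inv: "invertible Hh"
  proof (rule inv_ker, rule ccontr)
    fix z assume z: "Hh *v z = 0" "z \<noteq> 0"
    then have "z \<bullet> (Hh *v z) > 0" using Hh_pd by blast
    then show False using z(1) by simp
  qed
  have H_eq: "H = Hh ** Hh" using Hh_sq H_def by simp
  have H_inv: "invertible H" using H_eq invertible_mult Hh_inv by simp
  have Hs_inv: "invertible Hs"
  proof (rule inv_ker, rule ccontr)
    fix z assume z: "Hs *v z = 0" "z \<noteq> 0"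
    then have "z \<bullet> (Hs *v z) > 0" using sketch_pd[OF Ldiag Lge nu] Hs_def by blast
    then show False using z(1) by simp
  qed
  have Hxs: "H *v xs = b" by (simp add: xs_def matrix_vector_mul_assoc inv_props(1)[OF H_inv])
  have grad: "gradf H b (x k) = H *v e k" for k
    by (simp add: gradf_def e_def matrix_vector_mult_diff_distrib Hxs)
  have CC: "Cinv ** C = mat 1"
  proof -
    have "Cinv ** C = Hh ** (matrix_inv Hs ** ((Hh ** matrix_inv Hh) ** (Hs ** matrix_inv Hh)))"
      by (simp add: Cinv_def C_def matrix_mul_assoc)
    also have "\<dots> = Hh ** ((matrix_inv Hs ** Hs) ** matrix_inv Hh)"
      by (simp add: inv_props[OF Hh_inv] matrix_mul_assoc)
    also have "\<dots> = mat 1" by (simp add: inv_props[OF Hh_inv] inv_props[OF Hs_inv])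
    finally show ?thesis .
  qed
  have Cv: "C *v v j = lam j *\<^sub>R v j" for j
  proof -
    have "C *v v j = (\<Sum>i\<in>UNIV. (lam i * (v i \<bullet> v j)) *\<^sub>R v i)"
      using outer_sum_mv[of lam v "v j"] eig C_def Hs_def by simp
    also have "\<dots> = (\<Sum>i\<in>UNIV. if i = j then lam j *\<^sub>R v j else 0)"
      using v_on by (intro sum.cong) auto
    also have "\<dots> = lam j *\<^sub>R v j" by simp
    finally show ?thesis .
  qed
  have vnz: "v j \<noteq> 0" for j
  proof
    assume "v j = 0"
    then show False using v_on[rule_format, of j j] by simp
  qed
  have lam_nz: "lam j \<noteq> 0" for j
  proof
    assume "lam j = 0"
    then have "C *v v j = 0" using Cv by simp
    then have "Cinv *v (C *v v j) = 0" by simp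
    then show False using CC vnz by (simp add: matrix_vector_mul_assoc)
  qed
  have Cinv_v: "Cinv *v v j = inverse (lam j) *\<^sub>R v j" for j
  proof -
    have "v j = Cinv *v (C *v v j)" by (simp add: matrix_vector_mul_assoc CC)
    also have "\<dots> = lam j *\<^sub>R (Cinv *v v j)" by (simp add: Cv matrix_vector_mult_scaleR)
    finally have "inverse (lam j) *\<^sub>R v j = inverse (lam j) *\<^sub>R lam j *\<^sub>R (Cinv *v v j)" by simp
    then show ?thesis using lam_nz[of j] by simp
  qed
  have coordC: "v i \<bullet> (Cinv *v y) = inverse (lam i) * (v i \<bullet> y)" for i y
  proof -
    have "Cinv *v y = Cinv *v (\<Sum>k\<in>UNIV. (v k \<bullet> y) *\<^sub>R v k)"
      using orthonormal_expand(1)[OF v_on, of y] by simp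
    also have "\<dots> = (\<Sum>k\<in>UNIV. Cinv *v ((v k \<bullet> y) *\<^sub>R v k))"
      by (rule linear_sum[OF matrix_vector_mul_linear])
    also have "\<dots> = (\<Sum>k\<in>UNIV. ((v k \<bullet> y) * inverse (lam k)) *\<^sub>R v k)"
      by (simp add: matrix_vector_mult_scaleR Cinv_v)
    finally have "v i \<bullet> (Cinv *v y) = (\<Sum>k\<in>UNIV. ((v k \<bullet> y) * inverse (lam k)) * (v i \<bullet> v k))"
      by (simp add: inner_sum_right)
    also have "\<dots> = (\<Sum>k\<in>UNIV. if k = i then (v i \<bullet> y) * inverse (lam i) else 0)"
      using v_on by (intro sum.cong) auto
    finally show ?thesis by simp
  qed
  have stepC: "Hh *v (matrix_inv Hs *v (H *v w)) = Cinv *v (Hh *v w)" for w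
    by (simp add: Cinv_def H_eq matrix_vector_mul_assoc matrix_mul_assoc)
  have key: "\<exists>P. degree P \<le> k \<and> poly P 0 = 1 \<and>
     (\<forall>i. v i \<bullet> (Hh *v e k) = poly P (inverse (lam i)) * \<xi> i)" for k
  proof (induction k rule: less_induct)
    case (less k)
    show ?case
    proof (cases k)
      case 0
      then show ?thesis by (intro exI[of _ 1]) (simp add: \<xi>_def)
    next
      case (Suc m)
      define W where "W = {y. \<exists>R. degree R \<le> k \<and> poly R 0 = 0 \<and>
        (\<forall>i. v i \<bullet> (Hh *v (matrix_inv Hs *v y)) = poly R (inverse (lam i)) * \<xi> i)}"
      have subW: "subspace W"
        unfolding subspace_def
      proof (intro conjI ballI allI)
        show "0 \<in> W" unfolding W_def by (intro CollectI exI[of _ 0]) simp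
      next
        fix y z assume "y \<in> W" "z \<in> W"
        then obtain R1 R2 where R1: "degree R1 \<le> k" "poly R1 0 = 0"
          "\<forall>i. v i \<bullet> (Hh *v (matrix_inv Hs *v y)) = poly R1 (inverse (lam i)) * \<xi> i"
          and R2: "degree R2 \<le> k" "poly R2 0 = 0"
          "\<forall>i. v i \<bullet> (Hh *v (matrix_inv Hs *v z)) = poly R2 (inverse (lam i)) * \<xi> i"
          unfolding W_def by blast
        show "y + z \<in> W" unfolding W_def
          apply (intro CollectI exI[of _ "R1 + R2"])
          using R1 R2 degree_add_le[of R1 k R2]
          by (simp add: matrix_vector_right_distrib inner_add_right distrib_right)
      next
        fix c :: real and y assume "y \<in> W"
        then obtain R1 where R1: "degree R1 \<le> k" "poly R1 0 = 0"
          "\<forall>i. v i \<bullet> (Hh *v (matrix_inv Hs *v y)) = poly R1 (inverse (lam i)) * \<xi> i"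
          unfolding W_def by blast
        show "c *\<^sub>R y \<in> W" unfolding W_def
          apply (intro CollectI exI[of _ "smult c R1"])
          using R1 by (simp add: matrix_vector_mult_scaleR)
      qed
      have genW: "gradf H b (x j) \<in> W" if "j \<in> {..m}" for j
      proof -
        have "j < k" using that Suc by simp
        from less[OF this] obtain P where P: "degree P \<le> j" "poly P 0 = 1"
          "\<forall>i. v i \<bullet> (Hh *v e j) = poly P (inverse (lam i)) * \<xi> i" by blast
        have "degree (pCons 0 P) \<le> k"
          using P(1) \<open>j < k\<close> degree_pCons_le[of 0 P] by linarith
        then show ?thesis unfolding W_def grad
          apply (intro CollectI exI[of _ "pCons 0 P"])
          using P by (simp add: stepC coordC)
      qed
      have "span ((\<lambda>k. gradf H b (x k)) ` {..m}) \<subseteq> W"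
        by (rule span_minimal) (use genW subW in auto)
      moreover from iter[rule_format, of m] obtain y where
        y: "y \<in> span ((\<lambda>k. gradf H b (x k)) ` {..m})" "x (Suc m) - x 0 = matrix_inv Hs *v y"
        unfolding H_def Hs_def by blast
      ultimately have "y \<in> W" by blast
      then obtain R where R: "degree R \<le> k" "poly R 0 = 0"
          "\<forall>i. v i \<bullet> (Hh *v (matrix_inv Hs *v y)) = poly R (inverse (lam i)) * \<xi> i"
        unfolding W_def by blast
      have ek: "e k = e 0 + matrix_inv Hs *v y" using y(2) Suc by (simp add: e_def algebra_simps)
      have "degree (1 + R) \<le> k" using R(1) degree_add_le[of 1 k R] by simp
      then show ?thesis
        apply (intro exI[of _ "1 + R"])
        using R by (simp add: ek matrix_vector_right_distrib inner_add_right \<xi>_def[symmetric] distrib_right)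
    qed
  qed
  from key[of t] obtain P where P: "degree P \<le> t" "poly P 0 = 1"
    "\<forall>i. v i \<bullet> (Hh *v e t) = poly P (inverse (lam i)) * \<xi> i" by blast
  have "hnorm_sq H (e t) = e t \<bullet> (transpose Hh *v (Hh *v e t))"
    by (simp add: hnorm_sq_def H_eq matrix_vector_mul_assoc Hh_sym)
  also have "\<dots> = (Hh *v e t) \<bullet> (Hh *v e t)" by (rule inner_transpose_mv)
  also have "\<dots> = (\<Sum>i\<in>UNIV. (v i \<bullet> (Hh *v e t))^2)" by (rule orthonormal_expand(2)[OF v_on])
  also have "\<dots> = (\<Sum>i\<in>UNIV. (poly P (inverse (lam i)))^2 * (\<xi> i)^2)"
    using P(3) by (simp add: power_mult_distrib)
  finally have hn: "hnorm_sq H (e t) = (\<Sum>i\<in>UNIV. (poly P (inverse (lam i)))^2 * (\<xi> i)^2)" .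
  define X where "X = {(\<Sum>i\<in>UNIV. (poly Q (inverse (lam i)))^2 * (\<xi> i)^2) | Q.
       degree Q \<le> t \<and> poly Q 0 = 1}"
  have "Inf X \<le> hnorm_sq H (e t)"
  proof (rule cInf_lower)
    show "hnorm_sq H (e t) \<in> X" unfolding X_def hn using P(1,2) by blast
    show "bdd_below X" unfolding X_def
      by (rule bdd_belowI[of _ 0]) (auto intro: sum_nonneg)
  qed
  then have "lstar t lam \<xi> \<le> (1/2) * hnorm_sq H (e t)" unfolding lstar_def X_def by simp
  moreover have "\<xi> = (\<lambda>i. v i \<bullet> (Hh *v (x 0 - matrix_inv (hessH A \<nu> \<Lambda>) *v b)))"
    by (simp add: fun_eq_iff \<xi>_def e_def xs_def H_def)
  ultimately show ?thesis by (simp add: H_def e_def xs_def)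
qed

end
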